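(* Let $S_1$ be an arbitrary path string (possibly not canonical) and let $S_2$ be a canonical path string, and assume that neither contains symbolic links. Then $\mathrm{sanitize}(S_1,[S_2])$ returns true if and only if $S_1$ and $S_2$ refer to the same file on the file system.
   Context: Path strings are strings over valid filename characters together with "." and "/". Tokenization of a path string splits it on every maximal run of one or more consecutive "/" characters and discards empty pieces (as C's strtok_r with separator "/" does); e.g. "//a//b/c" tokenizes to a, b, c. A path string is canonical (canonicalized) if it is "/" or of the form "/$a_1$/$a_2$/.../$a_n$" with $n\ge 1$, where each $a_j$ is a nonempty filename containing no "/" and different from "." and "..". The algorithm sanitize takes a path string $U$ and a list $W$ of path strings. It starts with an empty stack of tokens and processes the tokens of $U$ from left to right: if the token is "..", it pops the top of the stack if the stack is nonempty and otherwise does nothing; if the token is ".", it does nothing; otherwise it pushes the token. The string representation of the final stack with contents $t_1,\dots,t_m$ (bottom to top) is "/" if $m=0$ and "/$t_1$/$t_2$/.../$t_m$" (no trailing slash) if $m\ge1$. sanitize returns true if this string is an element of $W$ (exact string equality) and false otherwise. Path strings are interpreted in a hierarchical (tree-shaped) file system rooted at "/", with no symbolic links and no wildcards: starting at the root, a filename token moves to the child of that name, "." stays in the current directory, and ".." moves to the parent directory (the parent of the root being the root). Two path strings refer to the same file if this resolution leads to the same file. *)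

theory Defs
  imports Main
begin

definition slash :: char where "slash = CHR ''/''"

text \<open>Valid filename characters: anything except the separator and NUL.
  Path strings are strings over these characters together with dot and slash
  (dot is already a valid filename character).\<close>
definition valid_fname_char :: "char \<Rightarrow> bool" where
  "valid_fname_char c \<longleftrightarrow> c \<noteq> slash \<and> c \<noteq> CHR 0x00"

definition path_string :: "string \<Rightarrow> bool" where
  "path_string s \<longleftrightarrow> (\<forall>c \<in> set s. valid_fname_char c \<or> c = CHR ''.'' \<or> c = slash)"

fun split_slash :: "string \<Rightarrow> string list" where
  "split_slash [] = [[]]"
| "split_slash (c # cs) =
     (if c = slash then [] # split_slash cs
      else (case split_slash cs of w # ws \<Rightarrow> (c # w) # ws | [] \<Rightarrow> [[c]]))"

text \<open>Tokenization as with strtok_r: split on maximal runs of slashes, discard empty pieces.\<close>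
definition tokens :: "string \<Rightarrow> string list" where
  "tokens s = filter (\<lambda>t. t \<noteq> []) (split_slash s)"

definition good_name :: "string \<Rightarrow> bool" where
  "good_name a \<longleftrightarrow> a \<noteq> [] \<and> slash \<notin> set a \<and> a \<noteq> ''.'' \<and> a \<noteq> ''..''"

definition canonical :: "string \<Rightarrow> bool" where
  "canonical s \<longleftrightarrow> s = ''/'' \<or>
     (\<exists>as. as \<noteq> [] \<and> (\<forall>a \<in> set as. good_name a) \<and> s = concat (map (\<lambda>a. ''/'' @ a) as))"

text \<open>Stack is a list, bottom first, top last.\<close>
definition san_step :: "string \<Rightarrow> string list \<Rightarrow> string list" where
  "san_step t st = (if t = ''..'' then (if st = [] then st else butlast st)
                    else if t = ''.'' then st else st @ [t])"

definition stack_repr :: "string list \<Rightarrow> string" where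
  "stack_repr st = (if st = [] then ''/'' else concat (map (\<lambda>t. ''/'' @ t) st))"

definition sanitize :: "string \<Rightarrow> string list \<Rightarrow> bool" where
  "sanitize U W \<longleftrightarrow> stack_repr (fold san_step (tokens U) []) \<in> set W"

text \<open>A file of the tree-shaped namespace rooted at the root is identified by the
  sequence of names leading to it from the root (root = empty sequence).\<close>
type_synonym fs_file = "string list"

definition fs_root :: fs_file where "fs_root = []"
definition fs_child :: "fs_file \<Rightarrow> string \<Rightarrow> fs_file" where "fs_child d a = d @ [a]"
definition fs_parent :: "fs_file \<Rightarrow> fs_file" where
  "fs_parent d = (if d = fs_root then fs_root else butlast d)"

definition resolve_step :: "string \<Rightarrow> fs_file \<Rightarrow> fs_file" where
  "resolve_step t d = (if t = ''.'' then d else if t = ''..'' then fs_parent d else fs_child d t)"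

definition resolve :: "string \<Rightarrow> fs_file" where
  "resolve s = fold resolve_step (tokens s) fs_root"

definition same_file :: "string \<Rightarrow> string \<Rightarrow> bool" where
  "same_file s1 s2 \<longleftrightarrow> resolve s1 = resolve s2"

end

theory Submission
  imports Defs
begin

lemma app_slash[simp]: "((@) ''/'') = ((#) CHR ''/'')"
  by (simp add: fun_eq_iff)

lemma san_eq: "san_step = resolve_step"
  by (auto simp: fun_eq_iff san_step_def resolve_step_def fs_parent_def fs_root_def fs_child_def)

lemma split_ne: "split_slash s \<noteq> []"
  by (induction s) (auto split: list.splits)

lemma split_app: "slash \<notin> set a \<Longrightarrow>
  split_slash (a @ s) = (a @ hd (split_slash s)) # tl (split_slash s)"
proof (induction a)
  case Nil then show ?case using split_ne[of s] by (cases "split_slash s") auto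
next
  case (Cons c a) then show ?case by auto
qed

lemma split_slashfree: "\<forall>w\<in>set (split_slash s). slash \<notin> set w"
  by (induction s) (auto split: list.splits)

lemma split_concat: "\<forall>a\<in>set X. slash \<notin> set a \<Longrightarrow>
  split_slash (concat (map (\<lambda>a. ''/'' @ a) X)) = (if X = [] then [[]] else [] # X)"
proof (induction X)
  case Nil then show ?case by simp
next
  case (Cons a X)
  have "split_slash (concat (map (\<lambda>a. ''/'' @ a) (a # X)))
      = [] # split_slash (a @ concat (map (\<lambda>a. ''/'' @ a) X))"
    by (simp add: slash_def)
  also have "\<dots> = [] # a # X" using Cons by (simp add: split_app)
  finally show ?case by simp
qed

lemma tokens_concat: "\<forall>a\<in>set X. slash \<notin> set a \<and> a \<noteq> [] \<Longrightarrow>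
  tokens (concat (map (\<lambda>a. ''/'' @ a) X)) = X"
  unfolding tokens_def by (subst split_concat) (auto simp: filter_id_conv)

lemma fold_pres: "\<forall>x\<in>set st. good_name x \<Longrightarrow> \<forall>t\<in>set ts. slash \<notin> set t \<and> t \<noteq> [] \<Longrightarrow>
  \<forall>x\<in>set (fold resolve_step ts st). good_name x"
proof (induction ts arbitrary: st)
  case Nil then show ?case by simp
next
  case (Cons t ts)
  have "\<forall>x\<in>set (resolve_step t st). good_name x"
    using Cons.prems by (auto simp: resolve_step_def fs_parent_def fs_root_def fs_child_def
       good_name_def dest: in_set_butlastD)
  then show ?case using Cons by simp
qed

lemma fold_good: "\<forall>t\<in>set X. good_name t \<Longrightarrow> fold resolve_step X st = st @ X"
  by (induction X arbitrary: st) (auto simp: resolve_step_def good_name_def fs_child_def)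

lemma tokens_good: "\<forall>t\<in>set (tokens s). slash \<notin> set t \<and> t \<noteq> []"
  using split_slashfree[of s] by (auto simp: tokens_def)

lemma resolve_good: "\<forall>x\<in>set (resolve s). good_name x"
  unfolding resolve_def fs_root_def by (rule fold_pres[OF _ tokens_good]) simp

lemma canon_resolve:
  assumes "canonical S2" shows "stack_repr (resolve S2) = S2"
proof -
  from assms consider "S2 = ''/''" | as where "as \<noteq> []" "\<forall>a \<in> set as. good_name a"
      "S2 = concat (map (\<lambda>a. ''/'' @ a) as)" unfolding canonical_def by blast
  then show ?thesis
  proof cases
    case 1
    have "tokens ''/'' = []" by (simp add: tokens_def slash_def)
    then show ?thesis using 1 by (simp add: resolve_def stack_repr_def fs_root_def)
  next
    case 2
    have "tokens S2 = as" using 2 tokens_concat[of as] by (auto simp: good_name_def)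
    then have "resolve S2 = as" using 2 fold_good[of as "[]"] by (simp add: resolve_def fs_root_def)
    then show ?thesis using 2 by (simp add: stack_repr_def)
  qed
qed

lemma repr_inj:
  assumes "\<forall>x\<in>set X. good_name x" "\<forall>x\<in>set Y. good_name x" "stack_repr X = stack_repr Y"
  shows "X = Y"
proof -
  have t: "tokens (stack_repr Z) = Z" if "\<forall>x\<in>set Z. good_name x" for Z
  proof (cases "Z = []")
    case True then show ?thesis by (simp add: stack_repr_def tokens_def slash_def)
  next
    case False then show ?thesis using that tokens_concat[of Z]
      unfolding stack_repr_def good_name_def by simp
  qed
  show ?thesis using t[OF assms(1)] t[OF assms(2)] assms(3) by metis
qed

theorem theorem1:
  assumes "path_string S1" and "path_string S2" and "canonical S2"
  shows "sanitize S1 [S2] \<longleftrightarrow> same_file S1 S2"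
proof -
  have s: "sanitize S1 [S2] \<longleftrightarrow> stack_repr (resolve S1) = S2"
    by (simp add: sanitize_def san_eq resolve_def fs_root_def)
  show ?thesis unfolding s same_file_def
    using canon_resolve[OF assms(3)] repr_inj[OF resolve_good resolve_good] by metis
qed

end
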